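(* Let $M\ge 1$ and let $I:\mathbb{R}_+^M\to\mathbb{R}_{++}$ be a concave function. Then $I$ is a standard interference function, i.e. (1) for all $\mathbf{x}\in\mathbb{R}_+^M$ and all $\alpha>1$, $\alpha I(\mathbf{x})>I(\alpha\mathbf{x})$; and (2) for all $\mathbf{x}_1,\mathbf{x}_2\in\mathbb{R}_+^M$ with $\mathbf{x}_1\ge\mathbf{x}_2$ (componentwise), $I(\mathbf{x}_1)\ge I(\mathbf{x}_2)$.
   Context: $\mathbb{R}_+$ denotes the nonnegative reals and $\mathbb{R}_{++}$ the strictly positive reals; vector inequalities are componentwise. A function $I:\mathbb{R}_+^M\to\mathbb{R}_{++}$ is called a standard interference function if it satisfies scalability ($\alpha I(\mathbf{x})>I(\alpha\mathbf{x})$ for all $\mathbf{x}\in\mathbb{R}_+^M$, $\alpha>1$) and monotonicity ($I(\mathbf{x}_1)\ge I(\mathbf{x}_2)$ whenever $\mathbf{x}_1\ge\mathbf{x}_2$). *)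

theory Defs
  imports "HOL-Analysis.Analysis"
begin

end

theory Submission
  imports Defs
begin

theorem proposition1:
  fixes I :: "real ^ 'm \<Rightarrow> real"
  assumes conc: "concave_on {x. \<forall>i. 0 \<le> x $ i} I"
    and pos: "\<And>x. (\<forall>i. 0 \<le> x $ i) \<Longrightarrow> I x > 0"
  shows "(\<forall>x \<alpha>. (\<forall>i. 0 \<le> x $ i) \<and> \<alpha> > 1 \<longrightarrow> \<alpha> * I x > I (\<alpha> *\<^sub>R x))
       \<and> (\<forall>x1 x2. (\<forall>i. 0 \<le> x1 $ i) \<and> (\<forall>i. 0 \<le> x2 $ i) \<and> (\<forall>i. x2 $ i \<le> x1 $ i)
              \<longrightarrow> I x1 \<ge> I x2)"
proof (intro conjI allI impI)
  fix x :: "real ^ 'm" and \<alpha> :: real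
  assume h: "(\<forall>i. 0 \<le> x $ i) \<and> \<alpha> > 1"
  define t where "t = 1 / \<alpha>"
  have t0: "t \<ge> 0" "t \<le> 1" using h by (auto simp: t_def)
  have z: "(0::real^'m) \<in> {x. \<forall>i. 0 \<le> x $ i}" by simp
  have y: "\<alpha> *\<^sub>R x \<in> {x. \<forall>i. 0 \<le> x $ i}" using h by simp
  have eq: "(1 - t) *\<^sub>R (0::real^'m) + t *\<^sub>R (\<alpha> *\<^sub>R x) = x"
    using h by (simp add: t_def)
  have "I x \<ge> (1 - t) * I 0 + t * I (\<alpha> *\<^sub>R x)"
    using concave_onD[OF conc t0 z y] eq by simp
  hence "\<alpha> * I x \<ge> \<alpha> * ((1 - t) * I 0 + t * I (\<alpha> *\<^sub>R x))"
    using h by (simp add: mult_left_mono)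
  also have "\<alpha> * ((1 - t) * I 0 + t * I (\<alpha> *\<^sub>R x)) = (\<alpha> - 1) * I 0 + I (\<alpha> *\<^sub>R x)"
    using h by (simp add: t_def field_simps)
  finally have a: "\<alpha> * I x \<ge> (\<alpha> - 1) * I 0 + I (\<alpha> *\<^sub>R x)" .
  have "(\<alpha> - 1) * I 0 > 0" using h pos[of 0] by simp
  with a show "\<alpha> * I x > I (\<alpha> *\<^sub>R x)" by linarith
next
  fix x1 x2 :: "real ^ 'm"
  assume h: "(\<forall>i. 0 \<le> x1 $ i) \<and> (\<forall>i. 0 \<le> x2 $ i) \<and> (\<forall>i. x2 $ i \<le> x1 $ i)"
  show "I x1 \<ge> I x2"
  proof (rule ccontr)
    assume "\<not> I x1 \<ge> I x2"
    hence lt: "I x1 < I x2" by simp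
    define \<delta> where "\<delta> = I x2 - I x1"
    have p1: "I x1 > 0" "I x2 > 0" using pos h by auto
    have dpos: "\<delta> > 0" "\<delta> < I x2" using lt p1 by (auto simp: \<delta>_def)
    define T where "T = 2 * I x2 / \<delta>"
    have T1: "T > 2" using dpos by (simp add: T_def field_simps)
    define t where "t = 1 / T"
    have t0: "t \<ge> 0" "t \<le> 1" using T1 by (auto simp: t_def)
    define y where "y = x2 + T *\<^sub>R (x1 - x2)"
    have yS: "y \<in> {x. \<forall>i. 0 \<le> x $ i}" using h T1 by (simp add: y_def)
    have x2S: "x2 \<in> {x. \<forall>i. 0 \<le> x $ i}" using h by simp
    have eq: "(1 - t) *\<^sub>R x2 + t *\<^sub>R y = x1"
      using T1 by (simp add: y_def t_def algebra_simps)
    have c: "I x1 \<ge> (1 - t) * I x2 + t * I y"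
      using concave_onD[OF conc t0 x2S yS] eq by simp
    have "t * I y > 0" using T1 pos yS by (simp add: t_def)
    with c have "I x1 > (1 - t) * I x2" by linarith
    moreover have "(1 - t) * I x2 = I x2 - \<delta> / 2"
      using dpos by (simp add: t_def T_def field_simps)
    ultimately have "I x2 - \<delta> / 2 < I x1" by simp
    thus False using lt unfolding \<delta>_def by (simp add: field_simps)
  qed
qed

end
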